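(* Let $k \ge 1$ be an integer, let $H$ be a graph, and let $x_1,\dots,x_k,y_1,\dots,y_k$ be $2k$ distinct vertices of $H$ such that $Z = \{x_1,\dots,x_k,y_1,\dots,y_k\}$ is an independent set of $H$. If $\tau(H) \ge 2k-1$, then $H$ contains a matching $\{m_1,\dots,m_k\}$ of size $k$ such that $m_i \cap \{x_j,y_j\} = \emptyset$ for all $i \neq j$.
   Context: All graphs are finite and simple. $\tau(H)$ denotes the vertex cover number of $H$ (minimum size of a vertex set meeting every edge of $H$). Edges are regarded as 2-element vertex sets. *)

theory Defs
  imports Main
begin

definition simple_graph :: "'a set \<Rightarrow> 'a set set \<Rightarrow> bool" where
  "simple_graph V E \<longleftrightarrow> finite V \<and> (\<forall>e\<in>E. e \<subseteq> V \<and> card e = 2)"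

definition vertex_cover :: "'a set \<Rightarrow> 'a set set \<Rightarrow> 'a set \<Rightarrow> bool" where
  "vertex_cover V E C \<longleftrightarrow> C \<subseteq> V \<and> (\<forall>e\<in>E. e \<inter> C \<noteq> {})"

definition tau :: "'a set \<Rightarrow> 'a set set \<Rightarrow> nat" where
  "tau V E = Min (card ` {C. vertex_cover V E C})"

definition independent_set :: "'a set set \<Rightarrow> 'a set \<Rightarrow> bool" where
  "independent_set E Z \<longleftrightarrow> (\<forall>e\<in>E. \<not> e \<subseteq> Z)"

end

theory Submission imports Defs begin

lemma hall:
  fixes N :: "'x \<Rightarrow> 'y set"
  assumes "finite X" "\<forall>x\<in>X. finite (N x)" "\<forall>T\<subseteq>X. card T \<le> card (\<Union>(N ` T))"
  shows "\<exists>f. inj_on f X \<and> (\<forall>x\<in>X. f x \<in> N x)"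
  using assms
proof (induction "card X" arbitrary: X N rule: less_induct)
  case less
  show ?case
  proof (cases "X = {}")
    case True then show ?thesis by auto
  next
    case False
    show ?thesis
    proof (cases "\<exists>T. T \<subseteq> X \<and> T \<noteq> {} \<and> T \<noteq> X \<and> card (\<Union>(N ` T)) \<le> card T")
      case True
      then obtain T where T: "T \<subseteq> X" "T \<noteq> {}" "T \<noteq> X" "card (\<Union>(N ` T)) \<le> card T" by blast
      define U where "U = \<Union>(N ` T)"
      have fT: "finite T" using T less.prems finite_subset by blast
      have "card T < card X" using T less.prems(1) by (meson psubsetI psubset_card_mono)
      have "\<exists>f. inj_on f T \<and> (\<forall>x\<in>T. f x \<in> N x)"
        apply (rule less.hyps[OF \<open>card T < card X\<close>]) using T less.prems fT by auto
      then obtain f1 where f1: "inj_on f1 T" "\<forall>x\<in>T. f1 x \<in> N x" by blast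
      define N2 where "N2 = (\<lambda>x. N x - U)"
      have "X - T \<subset> X" using T by blast
      then have c2: "card (X - T) < card X" using less.prems(1) by (meson psubset_card_mono)
      have h2: "\<forall>T'\<subseteq>X-T. card T' \<le> card (\<Union>(N2 ` T'))"
      proof (intro allI impI)
        fix T' assume T': "T' \<subseteq> X - T"
        have fin: "finite T'" using T' less.prems(1) finite_subset by blast
        have dj: "T \<inter> T' = {}" using T' by blast
        have "card T + card T' = card (T \<union> T')" using card_Un_disjoint[OF fT fin dj] by simp
        also have "\<dots> \<le> card (\<Union>(N ` (T \<union> T')))"
        proof -
          have "T \<union> T' \<subseteq> X" using T T' by blast
          then show ?thesis using less.prems(3) by blast
        qed
        also have "\<Union>(N ` (T \<union> T')) = U \<union> \<Union>(N2 ` T')" by (auto simp: U_def N2_def)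
        also have "card (U \<union> \<Union>(N2 ` T')) \<le> card U + card (\<Union>(N2 ` T'))" by (rule card_Un_le)
        finally have "card T + card T' \<le> card U + card (\<Union>(N2 ` T'))" .
        then show "card T' \<le> card (\<Union>(N2 ` T'))" using T(4) unfolding U_def by linarith
      qed
      have "\<exists>f. inj_on f (X - T) \<and> (\<forall>x\<in>X - T. f x \<in> N2 x)"
        apply (rule less.hyps[OF c2]) using h2 less.prems by (auto simp: N2_def)
      then obtain f2 where f2: "inj_on f2 (X - T)" "\<forall>x\<in>X - T. f2 x \<in> N2 x" by blast
      define f where "f x = (if x \<in> T then f1 x else f2 x)" for x
      have "inj_on f X"
      proof (rule inj_onI)
        fix u v assume uv: "u \<in> X" "v \<in> X" "f u = f v"
        have inU: "\<And>w. w \<in> T \<Longrightarrow> f1 w \<in> U" using f1(2) unfolding U_def by blast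
        have ninU: "\<And>w. w \<in> X - T \<Longrightarrow> f2 w \<notin> U" using f2(2) unfolding N2_def by blast
        show "u = v"
        proof (cases "u \<in> T"; cases "v \<in> T")
          assume "u \<in> T" "v \<in> T" then show ?thesis using uv f1(1) by (simp add: f_def inj_on_def)
        next
          assume "u \<in> T" "v \<notin> T" then show ?thesis using uv inU ninU by (metis DiffI f_def)
        next
          assume "u \<notin> T" "v \<in> T" then show ?thesis using uv inU ninU by (metis DiffI f_def)
        next
          assume "u \<notin> T" "v \<notin> T" then show ?thesis using uv f2(1) by (simp add: f_def inj_on_def)
        qed
      qed
      moreover have "\<forall>x\<in>X. f x \<in> N x" using f1 f2 by (auto simp: f_def N2_def)
      ultimately show ?thesis by blast
    next
      case False
      then have strict: "\<And>T. T \<subseteq> X \<Longrightarrow> T \<noteq> {} \<Longrightarrow> T \<noteq> X \<Longrightarrow> card T < card (\<Union>(N ` T))"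
        by (meson not_le)
      obtain a where a: "a \<in> X" using \<open>X \<noteq> {}\<close> by blast
      have "card {a} \<le> card (\<Union>(N ` {a}))" using less.prems(3) a by blast
      then have "N a \<noteq> {}" by auto
      then obtain b where b: "b \<in> N a" by blast
      define N2 where "N2 = (\<lambda>x. N x - {b})"
      have c2: "card (X - {a}) < card X" using less.prems(1) a by (metis card_Diff1_less)
      have h2: "\<forall>T'\<subseteq>X-{a}. card T' \<le> card (\<Union>(N2 ` T'))"
      proof (intro allI impI)
        fix T' assume T': "T' \<subseteq> X - {a}"
        show "card T' \<le> card (\<Union>(N2 ` T'))"
        proof (cases "T' = {}")
          case True then show ?thesis by simp
        next
          case False
          have fin: "finite T'" using T' less.prems(1) finite_subset by blast
          have finU: "finite (\<Union>(N ` T'))" using fin less.prems(2) T' by auto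
          have lt: "card T' < card (\<Union>(N ` T'))" using strict[of T'] T' False a by auto
          have eq: "\<Union>(N2 ` T') = \<Union>(N ` T') - {b}" by (auto simp: N2_def)
          have "card (\<Union>(N ` T')) - 1 \<le> card (\<Union>(N ` T') - {b})"
            using finU by (metis card_Diff1_le card_Diff_singleton_if diff_le_self order_refl)
          then show ?thesis using lt unfolding eq by linarith
        qed
      qed
      have "\<exists>f. inj_on f (X - {a}) \<and> (\<forall>x\<in>X - {a}. f x \<in> N2 x)"
        apply (rule less.hyps[OF c2]) using h2 less.prems by (auto simp: N2_def)
      then obtain f2 where f2: "inj_on f2 (X - {a})" "\<forall>x\<in>X - {a}. f2 x \<in> N2 x" by blast
      define f where "f = f2(a := b)"
      have "inj_on f X"
      proof (rule inj_onI)
        fix u v assume uv: "u \<in> X" "v \<in> X" "f u = f v"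
        have nb: "\<And>w. w \<in> X - {a} \<Longrightarrow> f2 w \<noteq> b" using f2(2) unfolding N2_def by blast
        show "u = v"
        proof (cases "u = a"; cases "v = a")
          assume "u = a" "v \<noteq> a" then show ?thesis using uv nb[of v] by (simp add: f_def)
        next
          assume "u \<noteq> a" "v = a" then show ?thesis using uv nb[of u] by (simp add: f_def)
        next
          assume "u \<noteq> a" "v \<noteq> a" then show ?thesis using uv f2(1) by (simp add: f_def inj_on_def)
        qed simp
      qed
      moreover have "\<forall>x\<in>X. f x \<in> N x" using f2 b by (auto simp: f_def N2_def)
      ultimately show ?thesis by blast
    qed
  qed
qed

theorem mainTheorem14:
  fixes V :: "'a set" and E :: "'a set set" and k :: nat and x y :: "nat \<Rightarrow> 'a"
  assumes "simple_graph V E"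
    and "k \<ge> 1"
    and "\<forall>i\<in>{1..k}. x i \<in> V \<and> y i \<in> V"
    and "inj_on x {1..k}" and "inj_on y {1..k}"
    and "\<forall>i\<in>{1..k}. \<forall>j\<in>{1..k}. x i \<noteq> y j"
    and "independent_set E (x ` {1..k} \<union> y ` {1..k})"
    and "tau V E \<ge> 2 * k - 1"
  shows "\<exists>m :: nat \<Rightarrow> 'a set.
           (\<forall>i\<in>{1..k}. m i \<in> E)
         \<and> (\<forall>i\<in>{1..k}. \<forall>j\<in>{1..k}. i \<noteq> j \<longrightarrow> m i \<inter> m j = {})
         \<and> (\<forall>i\<in>{1..k}. \<forall>j\<in>{1..k}. i \<noteq> j \<longrightarrow> m i \<inter> {x j, y j} = {})"
proof -
  note sg = assms(1)[unfolded simple_graph_def]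
  have finV: "finite V" using sg by blast
  have EV: "\<And>e. e \<in> E \<Longrightarrow> e \<subseteq> V" and Ec: "\<And>e. e \<in> E \<Longrightarrow> card e = 2" using sg by auto
  have finE: "finite E"
  proof -
    have "E \<subseteq> Pow V" using EV by blast
    then show ?thesis using finV by (meson finite_Pow_iff rev_finite_subset)
  qed
  define Z where "Z = x ` {1..k} \<union> y ` {1..k}"
  have indep: "\<And>e. e \<in> E \<Longrightarrow> \<not> e \<subseteq> Z" using assms(7) unfolding independent_set_def Z_def by blast
  define EW where "EW = {e\<in>E. e \<inter> Z = {}}"
  define mW where "mW M \<longleftrightarrow> M \<subseteq> EW \<and> (\<forall>e1\<in>M. \<forall>e2\<in>M. e1 \<noteq> e2 \<longrightarrow> e1 \<inter> e2 = {})" for M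
  have "\<exists>M. mW M \<and> (\<forall>M'. mW M' \<longrightarrow> card M' \<le> card M)"
  proof (rule ex_has_greatest_nat[of mW "{}" card "Suc (card E)"])
    show "mW {}" by (simp add: mW_def)
    show "\<forall>y. mW y \<longrightarrow> card y < Suc (card E)"
    proof (intro allI impI)
      fix M assume "mW M"
      then have "M \<subseteq> E" by (auto simp: mW_def EW_def)
      then show "card M < Suc (card E)" using finE by (simp add: card_mono le_imp_less_Suc)
    qed
  qed
  then obtain MW where MW: "mW MW" and MWmax: "\<And>M'. mW M' \<Longrightarrow> card M' \<le> card MW" by blast
  have MWE: "\<And>e. e \<in> MW \<Longrightarrow> e \<in> E" and MWZ: "\<And>e. e \<in> MW \<Longrightarrow> e \<inter> Z = {}"
    using MW by (auto simp: mW_def EW_def)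
  have MWdisj: "\<And>e1 e2. e1 \<in> MW \<Longrightarrow> e2 \<in> MW \<Longrightarrow> e1 \<noteq> e2 \<Longrightarrow> e1 \<inter> e2 = {}"
    using MW by (auto simp: mW_def)
  have finMW: "finite MW" using finE by (rule rev_finite_subset) (use MWE in blast)
  have maxl: "e \<inter> \<Union>MW \<noteq> {}" if e: "e \<in> EW" for e
  proof
    assume dis: "e \<inter> \<Union>MW = {}"
    have ne: "e \<noteq> {}" using e Ec[of e] by (auto simp: EW_def)
    have enot: "e \<notin> MW" using dis ne by blast
    have "mW (insert e MW)" using MW e dis unfolding mW_def by blast
    then have "card (insert e MW) \<le> card MW" by (rule MWmax)
    then show False using enot finMW by simp
  qed
  define R where "R = (V - Z) - \<Union>MW"
  define Nb where "Nb j = {w\<in>R. {x j, w} \<in> E \<or> {y j, w} \<in> E}" for j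
  have finNb: "finite (Nb j)" for j using finV by (auto simp: Nb_def R_def)
  define \<delta> where "\<delta> T = int (card T) - int (card (\<Union>(Nb ` T)))" for T
  have finvals: "finite (\<delta> ` Pow {1..k})" by simp
  have nevals: "\<delta> ` Pow {1..k} \<noteq> {}" by blast
  have "Max (\<delta> ` Pow {1..k}) \<in> \<delta> ` Pow {1..k}" by (rule Max_in[OF finvals nevals])
  then obtain S where S: "S \<in> Pow {1..k}" "\<delta> S = Max (\<delta> ` Pow {1..k})"
    by (metis imageE)
  have Smax: "\<And>T. T \<subseteq> {1..k} \<Longrightarrow> \<delta> T \<le> \<delta> S" using S Max_ge[OF finvals] by auto
  have "\<delta> {} = 0" by (simp add: \<delta>_def)
  then have dpos: "\<delta> S \<ge> 0" using Smax[of "{}"] by simp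
  define d where "d = nat (\<delta> S)"
  define N' where "N' j = Inl ` Nb j \<union> Inr ` {..<d}" for j
  have "\<exists>f. inj_on f {1..k} \<and> (\<forall>j\<in>{1..k}. f j \<in> N' j)"
  proof (rule hall)
    show "finite {1..k}" by simp
    show "\<forall>j\<in>{1..k}. finite (N' j)" using finNb by (simp add: N'_def)
    show "\<forall>T\<subseteq>{1..k}. card T \<le> card (\<Union>(N' ` T))"
    proof (intro allI impI)
      fix T assume T: "T \<subseteq> {1..k}"
      show "card T \<le> card (\<Union>(N' ` T))"
      proof (cases "T = {}")
        case True then show ?thesis by simp
      next
        case False
        have eq: "\<Union>(N' ` T) = Inl ` (\<Union>(Nb ` T)) \<union> Inr ` {..<d}" using False by (auto simp: N'_def)
        have finT: "finite T" using T finite_subset by blast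
        have "card (\<Union>(N' ` T)) = card (\<Union>(Nb ` T)) + d"
          unfolding eq
          by (subst card_Un_disjoint) (auto simp: card_image finT finNb)
        moreover have "\<delta> T \<le> int d" using Smax[OF T] dpos d_def by simp
        ultimately show ?thesis unfolding \<delta>_def by linarith
      qed
    qed
  qed
  then obtain f where f: "inj_on f {1..k}" "\<And>j. j \<in> {1..k} \<Longrightarrow> f j \<in> N' j" by blast
  define D where "D = {j\<in>{1..k}. f j \<in> range Inl}"
  have cD: "k - d \<le> card D"
  proof -
    have "f ` ({1..k} - D) \<subseteq> Inr ` {..<d}" using f(2) unfolding D_def N'_def by blast
    then have "card (f ` ({1..k} - D)) \<le> d" by (metis card_image card_lessThan card_mono finite_imageI finite_lessThan inj_Inr inj_on_subset subset_UNIV)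
    moreover have "card (f ` ({1..k} - D)) = card ({1..k} - D)"
      using f(1) by (meson Diff_subset card_image inj_on_subset)
    moreover have "card ({1..k} - D) = k - card D"
    proof -
      have Dsub: "D \<subseteq> {1..k}" by (auto simp: D_def)
      then have "finite D" using finite_subset by blast
      then show ?thesis using card_Diff_subset[OF _ Dsub] by simp
    qed
    ultimately show ?thesis by linarith
  qed

  have Dsub: "D \<subseteq> {1..k}" by (auto simp: D_def)
  have finD: "finite D" using Dsub finite_subset by blast
  define g where "g j = projl (f j)" for j
  have fD: "\<And>j. j \<in> D \<Longrightarrow> f j = Inl (g j)" by (auto simp: D_def g_def)
  have gN: "\<And>j. j \<in> D \<Longrightarrow> g j \<in> Nb j"
  proof -
    fix j assume j: "j \<in> D"
    have "f j \<in> N' j" using f(2) j Dsub by blast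
    then have "Inl (g j) \<in> Inl ` Nb j \<union> Inr ` {..<d}" using fD[OF j] by (simp add: N'_def)
    then show "g j \<in> Nb j" by auto
  qed
  have ginj: "inj_on g D"
  proof (rule inj_onI)
    fix i j assume ij: "i \<in> D" "j \<in> D" "g i = g j"
    then have "f i = f j" using fD by simp
    then show "i = j" using f(1) ij Dsub by (meson inj_onD subsetD)
  qed
  have gR: "\<And>j. j \<in> D \<Longrightarrow> g j \<in> R" using gN by (simp add: Nb_def)
  define v where "v j = (if {x j, g j} \<in> E then x j else y j)" for j
  have vE: "\<And>j. j \<in> D \<Longrightarrow> {v j, g j} \<in> E" using gN by (auto simp: v_def Nb_def)
  have vxy: "\<And>j. v j = x j \<or> v j = y j" by (simp add: v_def)
  have xyZ: "\<And>j. j \<in> {1..k} \<Longrightarrow> x j \<in> Z \<and> y j \<in> Z" by (simp add: Z_def)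
  define C where "C = \<Union>MW \<union> \<Union>(Nb ` S) \<union> x ` ({1..k} - S) \<union> y ` ({1..k} - S)"
  have key: "{a, b} \<inter> C \<noteq> {}" if ab: "{a, b} \<in> E" "a \<in> Z" "b \<notin> Z" for a b
  proof (cases "b \<in> \<Union>MW")
    case True then show ?thesis by (auto simp: C_def)
  next
    case False
    have "b \<in> V" using EV[OF ab(1)] by blast
    then have bR: "b \<in> R" using False ab(3) by (simp add: R_def)
    obtain j where j: "j \<in> {1..k}" "a = x j \<or> a = y j" using ab(2) by (auto simp: Z_def)
    show ?thesis
    proof (cases "j \<in> S")
      case True
      have "b \<in> Nb j" using bR j(2) ab(1) by (auto simp: Nb_def)
      then have "b \<in> C" using True by (auto simp: C_def)
      then show ?thesis by blast
    next
      case False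
      then have "a \<in> C" using j by (auto simp: C_def)
      then show ?thesis by blast
    qed
  qed
  have vc: "vertex_cover V E C"
    unfolding vertex_cover_def
  proof
    show "C \<subseteq> V"
    proof -
      have "\<Union>MW \<subseteq> V" using MWE EV by blast
      moreover have "\<Union>(Nb ` S) \<subseteq> V" by (auto simp: Nb_def R_def)
      moreover have "x ` ({1..k} - S) \<subseteq> V" "y ` ({1..k} - S) \<subseteq> V" using assms(3) by auto
      ultimately show ?thesis by (auto simp: C_def)
    qed
    show "\<forall>e\<in>E. e \<inter> C \<noteq> {}"
    proof
      fix e assume e: "e \<in> E"
      obtain a b where ab: "e = {a, b}" "a \<noteq> b" using Ec[OF e] by (meson card_2_iff)
      show "e \<inter> C \<noteq> {}"
      proof (cases "e \<inter> Z = {}")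
        case True
        then have "e \<in> EW" using e by (simp add: EW_def)
        then have "e \<inter> \<Union>MW \<noteq> {}" by (rule maxl)
        then show ?thesis by (auto simp: C_def)
      next
        case False
        have "\<not> e \<subseteq> Z" using indep[OF e] .
        then have "(a \<in> Z \<and> b \<notin> Z) \<or> (b \<in> Z \<and> a \<notin> Z)" using False ab by auto
        then show ?thesis
        proof
          assume "a \<in> Z \<and> b \<notin> Z" then show ?thesis using key[of a b] e ab by auto
        next
          assume "b \<in> Z \<and> a \<notin> Z" then show ?thesis using key[of b a] e ab by (auto simp: insert_commute)
        qed
      qed
    qed
  qed
  have tauC: "tau V E \<le> card C"
  proof -
    have "card ` {C. vertex_cover V E C} \<subseteq> {0..card V}"
      using finV by (auto simp: vertex_cover_def card_mono)
    then have fin: "finite (card ` {C. vertex_cover V E C})" using finite_subset by blast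
    show ?thesis unfolding tau_def by (rule Min_le[OF fin]) (use vc in blast)
  qed
  have cMW: "card (\<Union>MW) \<le> 2 * card MW"
  proof -
    have "card (\<Union>MW) \<le> sum card MW" by (rule card_Union_le_sum_card)
    also have "sum card MW = sum (\<lambda>_. 2) MW" using MWE Ec by (intro sum.cong) auto
    finally show ?thesis by simp
  qed
  have cS: "card S \<le> k" using S(1) by (metis PowD card_atLeastAtMost card_mono diff_Suc_1 finite_atLeastAtMost)
  have cX: "card (x ` ({1..k} - S)) \<le> k - card S" "card (y ` ({1..k} - S)) \<le> k - card S"
  proof -
    have "card ({1..k} - S) = k - card S" using S(1) by (simp add: card_Diff_subset finite_subset)
    then show "card (x ` ({1..k} - S)) \<le> k - card S" "card (y ` ({1..k} - S)) \<le> k - card S"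
      by (metis card_image_le finite_Diff finite_atLeastAtMost)+
  qed
  have cC: "card C \<le> 2 * card MW + card (\<Union>(Nb ` S)) + 2 * (k - card S)"
  proof -
    have "card C \<le> card (\<Union>MW) + card (\<Union>(Nb ` S)) + card (x ` ({1..k} - S)) + card (y ` ({1..k} - S))"
      unfolding C_def by (meson add_le_mono card_Un_le order_trans le_refl)
    then show ?thesis using cMW cX by linarith
  qed
  have dS: "int d = int (card S) - int (card (\<Union>(Nb ` S)))" using dpos by (simp add: d_def \<delta>_def)
  have big: "k \<le> card MW + card D"
    using assms(8) assms(2) tauC cC cS dS cD by linarith
  have "card ({1..k} - D) \<le> card MW"
  proof -
    have "card ({1..k} - D) = k - card D" using card_Diff_subset[OF finD Dsub] by simp
    then show ?thesis using big by linarith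
  qed
  then obtain h where h: "h ` ({1..k} - D) \<subseteq> MW" "inj_on h ({1..k} - D)"
    using card_le_inj[OF _ finMW] by blast
  define m where "m j = (if j \<in> D then {v j, g j} else h j)" for j
  have pd: "x i \<noteq> x j \<and> y i \<noteq> y j \<and> x i \<noteq> y j \<and> y i \<noteq> x j"
    if "i \<in> {1..k}" "j \<in> {1..k}" "i \<noteq> j" for i j
    using that assms(4,5,6) by (metis inj_onD)
  have gZ: "\<And>j. j \<in> D \<Longrightarrow> g j \<notin> Z \<and> g j \<notin> \<Union>MW" using gR by (simp add: R_def)
  have hZ: "\<And>j. j \<in> {1..k} - D \<Longrightarrow> h j \<in> MW \<and> h j \<inter> Z = {}" using h(1) MWZ by blast
  have P1: "\<forall>i\<in>{1..k}. m i \<in> E"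
    using vE hZ MWE by (auto simp: m_def)
  have P2: "\<forall>i\<in>{1..k}. \<forall>j\<in>{1..k}. i \<noteq> j \<longrightarrow> m i \<inter> m j = {}"
  proof (intro ballI impI)
    fix i j assume ij: "i \<in> {1..k}" "j \<in> {1..k}" "i \<noteq> j"
    show "m i \<inter> m j = {}"
    proof (cases "i \<in> D"; cases "j \<in> D")
      assume a: "i \<in> D" "j \<in> D"
      have "v i \<noteq> v j" using pd[OF ij] vxy[of i] vxy[of j] by auto
      moreover have "g i \<noteq> g j" using ginj a ij(3) by (meson inj_onD)
      moreover have "v i \<noteq> g j" "g i \<noteq> v j" using gZ a xyZ ij vxy by metis+
      ultimately show ?thesis using a by (auto simp: m_def)
    next
      assume a: "i \<in> D" "j \<notin> D"
      have "v i \<in> Z" using xyZ ij vxy by metis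
      then show ?thesis using a gZ[of i] hZ[of j] ij by (auto simp: m_def)
    next
      assume a: "i \<notin> D" "j \<in> D"
      have "v j \<in> Z" using xyZ ij vxy by metis
      then show ?thesis using a gZ[of j] hZ[of i] ij by (auto simp: m_def)
    next
      assume a: "i \<notin> D" "j \<notin> D"
      have "h i \<noteq> h j" using h(2) a ij by (meson DiffI inj_onD)
      then show ?thesis using a hZ ij MWdisj by (auto simp: m_def)
    qed
  qed
  have P3: "\<forall>i\<in>{1..k}. \<forall>j\<in>{1..k}. i \<noteq> j \<longrightarrow> m i \<inter> {x j, y j} = {}"
  proof (intro ballI impI)
    fix i j assume ij: "i \<in> {1..k}" "j \<in> {1..k}" "i \<noteq> j"
    show "m i \<inter> {x j, y j} = {}"
    proof (cases "i \<in> D")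
      case True
      have "v i \<noteq> x j" "v i \<noteq> y j" using pd[OF ij] vxy[of i] by auto
      moreover have "g i \<noteq> x j" "g i \<noteq> y j" using gZ[OF True] xyZ[OF ij(2)] by auto
      ultimately show ?thesis using True by (auto simp: m_def)
    next
      case False
      then show ?thesis using hZ[of i] xyZ[OF ij(2)] ij by (auto simp: m_def)
    qed
  qed
  show ?thesis using P1 P2 P3 by blast
qed

end
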